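(* Let $\Lambda$ be a finite-dimensional algebra over an algebraically closed field $k$ and let $M_1,M_2$ be finitely generated $\Lambda$-modules. Suppose there is $0\neq\beta\in\mathrm{Hom}_\Lambda(M_2,M_1)$ such that $\alpha\beta=0$ for every $\alpha\in\mathrm{Hom}_\Lambda(M_1,M_2)$. Then $\mathrm{End}_\Lambda(M_1\oplus M_2)$ is not a symmetric algebra.
   Context: An algebra $A$ is symmetric if there is a linear form $\lambda:A\to k$ with $\lambda(ab)=\lambda(ba)$ for all $a,b$ whose kernel contains no nonzero left ideal. *)

theory Defs
  imports "HOL-Computational_Algebra.Polynomial" "HOL-Library.Product_Plus"
begin

definition alg_closed_field :: "'k::field itself \<Rightarrow> bool" where
  "alg_closed_field _ \<longleftrightarrow> (\<forall>p::'k poly. degree p > 0 \<longrightarrow> (\<exists>x. poly p x = 0))"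

definition fd_algebra :: "('k::field \<Rightarrow> 'l::ring_1 \<Rightarrow> 'l) \<Rightarrow> bool" where
  "fd_algebra sc \<longleftrightarrow>
     (\<forall>a x y. sc a (x + y) = sc a x + sc a y) \<and>
     (\<forall>a b x. sc (a + b) x = sc a x + sc b x) \<and>
     (\<forall>a b x. sc a (sc b x) = sc (a * b) x) \<and>
     (\<forall>x. sc 1 x = x) \<and>
     (\<forall>a x y. sc a (x * y) = (sc a x) * y \<and> sc a (x * y) = x * (sc a y)) \<and>
     (\<exists>B. finite B \<and> (\<forall>x. \<exists>c. x = (\<Sum>b\<in>B. sc (c b) b)))"

definition lmodule :: "('l::ring_1 \<Rightarrow> 'm::ab_group_add \<Rightarrow> 'm) \<Rightarrow> bool" where
  "lmodule act \<longleftrightarrow>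
     (\<forall>a x y. act a (x + y) = act a x + act a y) \<and>
     (\<forall>a b x. act (a + b) x = act a x + act b x) \<and>
     (\<forall>a b x. act (a * b) x = act a (act b x)) \<and>
     (\<forall>x. act 1 x = x)"

definition fg_module :: "('l::ring_1 \<Rightarrow> 'm::ab_group_add \<Rightarrow> 'm) \<Rightarrow> bool" where
  "fg_module act \<longleftrightarrow> lmodule act \<and>
     (\<exists>S. finite S \<and> (\<forall>x. \<exists>c. x = (\<Sum>s\<in>S. act (c s) s)))"

definition module_hom :: "('l::ring_1 \<Rightarrow> 'm::ab_group_add \<Rightarrow> 'm) \<Rightarrow> ('l \<Rightarrow> 'n::ab_group_add \<Rightarrow> 'n)
    \<Rightarrow> ('m \<Rightarrow> 'n) set" where
  "module_hom actM actN = {f. (\<forall>x y. f (x + y) = f x + f y) \<and> (\<forall>a x. f (actM a x) = actN a (f x))}"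

definition dsum_act :: "('l \<Rightarrow> 'm1 \<Rightarrow> 'm1) \<Rightarrow> ('l \<Rightarrow> 'm2 \<Rightarrow> 'm2) \<Rightarrow> 'l \<Rightarrow> 'm1 \<times> 'm2 \<Rightarrow> 'm1 \<times> 'm2" where
  "dsum_act act1 act2 a z = (act1 a (fst z), act2 a (snd z))"

definition left_ideal :: "'a set \<Rightarrow> ('a \<Rightarrow> 'a \<Rightarrow> 'a) \<Rightarrow> 'a \<Rightarrow> ('k \<Rightarrow> 'a \<Rightarrow> 'a)
    \<Rightarrow> ('a \<Rightarrow> 'a \<Rightarrow> 'a) \<Rightarrow> 'a set \<Rightarrow> bool" where
  "left_ideal A add zero scl mul I \<longleftrightarrow> I \<subseteq> A \<and> zero \<in> I \<and>
     (\<forall>x\<in>I. \<forall>y\<in>I. add x y \<in> I) \<and> (\<forall>c. \<forall>x\<in>I. scl c x \<in> I) \<and>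
     (\<forall>a\<in>A. \<forall>x\<in>I. mul a x \<in> I)"

definition symmetric_alg :: "'a set \<Rightarrow> ('a \<Rightarrow> 'a \<Rightarrow> 'a) \<Rightarrow> 'a \<Rightarrow> ('k::field \<Rightarrow> 'a \<Rightarrow> 'a)
    \<Rightarrow> ('a \<Rightarrow> 'a \<Rightarrow> 'a) \<Rightarrow> bool" where
  "symmetric_alg A add zero scl mul \<longleftrightarrow>
     (\<exists>tr::'a \<Rightarrow> 'k.
        (\<forall>x\<in>A. \<forall>y\<in>A. tr (add x y) = tr x + tr y) \<and>
        (\<forall>c. \<forall>x\<in>A. tr (scl c x) = c * tr x) \<and>
        (\<forall>x\<in>A. \<forall>y\<in>A. tr (mul x y) = tr (mul y x)) \<and>
        (\<forall>I. left_ideal A add zero scl mul I \<and> I \<subseteq> {x\<in>A. tr x = 0} \<longrightarrow> I \<subseteq> {zero}))"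

definition End_dsum_symmetric ::
  "('k::field \<Rightarrow> 'l::ring_1 \<Rightarrow> 'l) \<Rightarrow> ('l \<Rightarrow> 'm1::ab_group_add \<Rightarrow> 'm1) \<Rightarrow> ('l \<Rightarrow> 'm2::ab_group_add \<Rightarrow> 'm2) \<Rightarrow> bool" where
  "End_dsum_symmetric sc act1 act2 \<longleftrightarrow>
     symmetric_alg (module_hom (dsum_act act1 act2) (dsum_act act1 act2))
       (\<lambda>f g z. (fst (f z) + fst (g z), snd (f z) + snd (g z)))
       (\<lambda>z. (0, 0))
       (\<lambda>c f z. dsum_act act1 act2 (sc c 1) (f z))
       (\<lambda>f g. f \<circ> g)"

end

theory Submission
  imports Defs
begin

lemma add_zero_gen: "(f::'a::ab_group_add \<Rightarrow> 'b::ab_group_add) (0 + 0) = f 0 + f 0 \<Longrightarrow> f 0 = 0"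
  by simp

theorem lemma4p1:
  fixes sc :: "'k::field \<Rightarrow> 'l::ring_1 \<Rightarrow> 'l"
    and act1 :: "'l \<Rightarrow> 'm1::ab_group_add \<Rightarrow> 'm1"
    and act2 :: "'l \<Rightarrow> 'm2::ab_group_add \<Rightarrow> 'm2"
    and \<beta> :: "'m2 \<Rightarrow> 'm1"
  assumes "alg_closed_field TYPE('k)"
    and "fd_algebra sc"
    and "fg_module act1"
    and "fg_module act2"
    and "\<beta> \<in> module_hom act2 act1"
    and "\<beta> \<noteq> (\<lambda>_. 0)"
    and "\<forall>\<alpha> \<in> module_hom act1 act2. \<alpha> \<circ> \<beta> = (\<lambda>_. 0)"
  shows "\<not> End_dsum_symmetric sc act1 act2"
proof
  assume S: "End_dsum_symmetric sc act1 act2"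
  define D where "D = dsum_act act1 act2"
  define A where "A = module_hom D D"
  define add :: "('m1\<times>'m2 \<Rightarrow> 'm1\<times>'m2) \<Rightarrow> _ \<Rightarrow> _" where
    "add = (\<lambda>f g z. (fst (f z) + fst (g z), snd (f z) + snd (g z)))"
  define zero :: "'m1\<times>'m2 \<Rightarrow> 'm1\<times>'m2" where "zero = (\<lambda>z. (0, 0))"
  define scl where "scl = (\<lambda>c f (z::'m1\<times>'m2). D (sc c 1) (f z))"
  define mul :: "('m1\<times>'m2 \<Rightarrow> 'm1\<times>'m2) \<Rightarrow> ('m1\<times>'m2 \<Rightarrow> 'm1\<times>'m2) \<Rightarrow> _" where "mul = (\<lambda>f g. f \<circ> g)"
  have SA: "symmetric_alg A add zero scl mul"
    using S unfolding End_dsum_symmetric_def A_def D_def add_def zero_def scl_def mul_def .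
  then obtain tr :: "_ \<Rightarrow> 'k" where
    tadd: "\<forall>x\<in>A. \<forall>y\<in>A. tr (add x y) = tr x + tr y" and
    tscl: "\<forall>c. \<forall>x\<in>A. tr (scl c x) = c * tr x" and
    tsym: "\<forall>x\<in>A. \<forall>y\<in>A. tr (mul x y) = tr (mul y x)" and
    tid: "\<forall>I. left_ideal A add zero scl mul I \<and> I \<subseteq> {x\<in>A. tr x = 0} \<longrightarrow> I \<subseteq> {zero}"
    unfolding symmetric_alg_def by (elim exE conjE) (rule that)
  have l1: "lmodule act1" and l2: "lmodule act2" using assms(3,4) by (auto simp: fg_module_def)
  have a1add: "act1 a (x + y) = act1 a x + act1 a y" for a x y using l1 by (simp add: lmodule_def)
  have a2add: "act2 a (x + y) = act2 a x + act2 a y" for a x y using l2 by (simp add: lmodule_def)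
  have a10: "act1 a 0 = 0" for a
    using a1add[of a 0 0] by simp
  have a20: "act2 a 0 = 0" for a
    using a2add[of a 0 0] by simp
  have a1mul: "act1 (a * b) x = act1 a (act1 b x)" for a b x using l1 by (simp add: lmodule_def)
  have a2mul: "act2 (a * b) x = act2 a (act2 b x)" for a b x using l2 by (simp add: lmodule_def)
  have Dd: "D a z = (act1 a (fst z), act2 a (snd z))" for a z by (simp add: D_def dsum_act_def)
  have homA: "f \<in> A \<longleftrightarrow> (\<forall>x y. f (x + y) = f x + f y) \<and> (\<forall>a x. f (D a x) = D a (f x))" for f
    by (simp add: A_def module_hom_def)
  have hom0: "f \<in> A \<Longrightarrow> f 0 = 0" for f
  proof -
    assume "f \<in> A"
    then have "f (0 + 0) = f 0 + f 0" using homA by blast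
    then show ?thesis by simp
  qed
  have bhom: "\<beta> (x + y) = \<beta> x + \<beta> y" "\<beta> (act2 a y) = act1 a (\<beta> y)" for x y a
    using assms(5) by (auto simp: module_hom_def)
  have b0: "\<beta> 0 = 0" using bhom(1)[of 0 0] by simp
  have fd: "sc c (x * y) = sc c x * y" "sc c (x * y) = x * sc c y" for c x y
    using assms(2) unfolding fd_algebra_def by blast+
  have comm: "sc c 1 * a = a * sc c 1" for c a
    using fd[of c 1 a] fd[of c a 1] by simp
  define E :: "'m1\<times>'m2 \<Rightarrow> 'm1\<times>'m2" where "E = (\<lambda>z. (\<beta> (snd z), 0))"
  define e1 :: "'m1\<times>'m2 \<Rightarrow> 'm1\<times>'m2" where "e1 = (\<lambda>z. (fst z, 0))"
  define e2 :: "'m1\<times>'m2 \<Rightarrow> 'm1\<times>'m2" where "e2 = (\<lambda>z. (0, snd z))"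
  have EA: "E \<in> A" unfolding homA E_def Dd by (simp add: bhom a20)
  have e1A: "e1 \<in> A" unfolding homA e1_def Dd by (simp add: a20)
  have e2A: "e2 \<in> A" unfolding homA e2_def Dd by (simp add: a10)
  have zA: "zero \<in> A" unfolding homA zero_def Dd by (simp add: a10 a20)
  have addA: "f \<in> A \<Longrightarrow> g \<in> A \<Longrightarrow> add f g \<in> A" for f g
    unfolding homA add_def Dd by (auto simp: a1add a2add algebra_simps)
  have mulA: "f \<in> A \<Longrightarrow> g \<in> A \<Longrightarrow> mul f g \<in> A" for f g
    unfolding homA mul_def by (simp del: split_paired_All)
  have sclA: "f \<in> A \<Longrightarrow> scl c f \<in> A" for f c
  proof -
    assume f: "f \<in> A"
    have c1: "act1 (sc c 1) (act1 a x) = act1 a (act1 (sc c 1) x)" for a x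
      by (metis a1mul comm)
    have c2: "act2 (sc c 1) (act2 a x) = act2 a (act2 (sc c 1) x)" for a x
      by (metis a2mul comm)
    have "\<forall>x y. f (x + y) = f x + f y" "\<forall>a x. f (D a x) = D a (f x)" using f homA by blast+
    then show ?thesis unfolding homA scl_def
      by (auto simp: Dd a1add a2add c1 c2 simp del: )
  qed
  have tz: "tr zero = 0"
  proof -
    have "add zero zero = zero" by (simp add: add_def zero_def)
    then show ?thesis using tadd zA by (metis add_cancel_right_right)
  qed
  define I where "I = {mul f E | f. f \<in> A}"
  have ideal: "left_ideal A add zero scl mul I"
    unfolding left_ideal_def
  proof (intro conjI ballI allI subsetI)
    show "x \<in> A" if "x \<in> I" for x using that EA mulA by (auto simp: I_def)
    have "mul zero E = zero" by (simp add: mul_def zero_def o_def)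
    then show "zero \<in> I" unfolding I_def using zA by (metis (mono_tags, lifting) mem_Collect_eq)
    show "add x y \<in> I" if xy: "x \<in> I" "y \<in> I" for x y
    proof -
      obtain f g where "f \<in> A" "g \<in> A" "x = mul f E" "y = mul g E"
        using xy unfolding I_def by blast
      moreover have "add (mul f E) (mul g E) = mul (add f g) E"
        by (simp add: add_def mul_def o_def)
      ultimately show ?thesis unfolding I_def using addA by blast
    qed
    show "scl c x \<in> I" if xy: "x \<in> I" for x c
    proof -
      obtain f where "f \<in> A" "x = mul f E"
        using xy unfolding I_def by blast
      moreover have "scl c (mul f E) = mul (scl c f) E"
        by (simp add: scl_def mul_def o_def)
      ultimately show ?thesis unfolding I_def using sclA by blast
    qed
    show "mul a x \<in> I" if ax: "a \<in> A" and xy: "x \<in> I" for a x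
    proof -
      obtain f where "f \<in> A" "x = mul f E"
        using xy unfolding I_def by blast
      moreover have "mul a (mul f E) = mul (mul a f) E"
        by (simp add: mul_def o_def)
      ultimately show ?thesis unfolding I_def using mulA ax by blast
    qed
  qed
  have trI: "tr (mul f E) = 0" if f: "f \<in> A" for f
  proof -
    define \<alpha> where "\<alpha> = (\<lambda>x. snd (f (x, 0::'m2)))"
    have "\<alpha> \<in> module_hom act1 act2"
    proof -
      have "\<alpha> (x + y) = \<alpha> x + \<alpha> y" for x y
      proof -
        have "f ((x,0) + (y,0)) = f (x,0) + f (y,0)" using f homA by blast
        then show ?thesis by (simp add: \<alpha>_def)
      qed
      moreover have "\<alpha> (act1 a x) = act2 a (\<alpha> x)" for a x
      proof -
        have "f (D a (x, 0)) = D a (f (x,0))" using f homA by blast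
        then show ?thesis by (simp add: Dd a20 \<alpha>_def)
      qed
      ultimately show ?thesis by (simp add: module_hom_def)
    qed
    with assms(7) have ab: "\<alpha> (\<beta> y) = 0" for y by (metis comp_apply)
    have split: "mul f E = add (mul e1 (mul f E)) (mul e2 (mul f E))"
      by (auto simp: add_def mul_def e1_def e2_def)
    have z2: "mul e2 (mul f E) = zero"
      using ab by (auto simp: mul_def e2_def E_def zero_def \<alpha>_def)
    have z1: "mul (mul f E) e1 = zero"
      using hom0[OF f] by (auto simp: mul_def e1_def E_def zero_def zero_prod_def b0 o_def)
    have fE: "mul f E \<in> A" using f EA mulA by blast
    have "tr (mul f E) = tr (mul e1 (mul f E)) + tr (mul e2 (mul f E))"
      using split tadd fE e1A e2A mulA by (metis (no_types))
    also have "tr (mul e1 (mul f E)) = tr (mul (mul f E) e1)" using tsym fE e1A by blast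
    finally show ?thesis using z1 z2 tz by simp
  qed
  have "I \<subseteq> {x\<in>A. tr x = 0}"
    using trI EA mulA by (auto simp: I_def)
  with tid ideal have "I \<subseteq> {zero}" by blast
  moreover have "mul id E \<in> I"
  proof -
    have "id \<in> A" unfolding homA by simp
    then show ?thesis unfolding I_def by blast
  qed
  ultimately have "E = zero" by (auto simp: mul_def)
  then have "\<beta> y = 0" for y unfolding E_def zero_def by (metis fst_conv snd_conv)
  with assms(6) show False by blast
qed

end
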